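(* For any traversal sequence $\tau$, metric $d$, and sequence of tasks $w^1,\dots,w^n$, let $C^{A2}$ be the total cost (processing plus transition cost) of the "follow the traversal" algorithm and $C^T$ the total cost (processing plus transition cost) of the fractional traversal algorithm on that task sequence. Then $C^{A2}\le 2\,C^T$.
   Context: A metrical task system has states $S=\{1,\dots,m\}$ and a symmetric non-negative matrix $(d_{st})$ with $d_{ss}=0$ satisfying the triangle inequality. A task is a vector $w\in\mathbb{R}_{\ge0}^m$. A traversal sequence is an infinite sequence $\tau=\tau_1,\tau_2,\dots$ of states. Write $\delta_{\ell,\ell'}=\delta_{\ell',\ell}=\sum_{j=\min(\ell,\ell')}^{\max(\ell,\ell')-1}d_{\tau_j\tau_{j+1}}$. Fractional traversal algorithm (FTA) on $\tau$: it keeps a position $j$ (initially $t_0=1$) and the work $\rho$ done at the current position since arriving (initially $0$). On a task $w$, with remaining fraction $f=1$, it repeats while $f>0$: $\lambda\gets\min\{(d_{\tau_j\tau_{j+1}}-\rho)/w_{\tau_j},f\}$ (interpreted as $f$ if $w_{\tau_j}=0$), $\rho\gets\rho+\lambda w_{\tau_j}$ (work done in state $\tau_j$), $f\gets f-\lambda$, and if $\rho=d_{\tau_j\tau_{j+1}}$ then $j\gets j+1,\rho\gets0$. Let $t_i$ be its position after task $i$. Its processing cost is the total work done and its transition cost is $\delta_{t_0,t_n}$. "Follow the traversal" algorithm: keeps a position $\ell_i$ in $\tau$, with $\ell_0=1$, and is run alongside the FTA on the same tasks. Given task $w^i$, let $j_{\min}=\min(\ell_{i-1},t_{i-1})$,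 $j_{\max}=\max(\ell_{i-1},t_{i-1})$, $D_0=\{j_{\min},\dots,j_{\max}\}$, and $\tilde c(j)=w^i_{\tau_j}$ if $j\in D_0$, $\tilde c(j)=w^i_{\tau_j}+\delta_{j_{\max},j}$ if $j>j_{\max}$, $\tilde c(j)=\infty$ otherwise. It sets $\ell_i\in\arg\min_{j\ge j_{\min}}\tilde c(j)$ (ties broken arbitrarily), moves to state $\tau_{\ell_i}$ and processes the whole task there, incurring cost $d_{\tau_{\ell_{i-1}}\tau_{\ell_i}}+w^i_{\tau_{\ell_i}}$. *)

theory Defs
  imports Complex_Main "HOL-Library.While_Combinator"
begin

text \<open>States form a finite type 's; the traversal is tau :: nat => 's, indexed from 1
  (tau 0 is irrelevant). delta l l' is the traversal distance between positions l and l'.\<close>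

definition delta :: "('s \<Rightarrow> 's \<Rightarrow> real) \<Rightarrow> (nat \<Rightarrow> 's) \<Rightarrow> nat \<Rightarrow> nat \<Rightarrow> real" where
  "delta d tau l l' = (\<Sum>j = min l l'..<max l l'. d (tau j) (tau (Suc j)))"

definition metric_ts :: "('s \<Rightarrow> 's \<Rightarrow> real) \<Rightarrow> bool" where
  "metric_ts d \<longleftrightarrow> (\<forall>s t. 0 \<le> d s t) \<and> (\<forall>s t. d s t = d t s) \<and> (\<forall>s. d s s = 0)
     \<and> (\<forall>s t u. d s u \<le> d s t + d t u)"

text \<open>One iteration of the inner loop of the fractional traversal algorithm (FTA).
  Configuration: (position j, work rho at current position, remaining fraction f,
  accumulated processing cost c).\<close>

definition fta_step :: "('s \<Rightarrow> 's \<Rightarrow> real) \<Rightarrow> (nat \<Rightarrow> 's) \<Rightarrow> ('s \<Rightarrow> real)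
    \<Rightarrow> nat \<times> real \<times> real \<times> real \<Rightarrow> nat \<times> real \<times> real \<times> real" where
  "fta_step d tau w cfg = (case cfg of (j, rho, f, c) \<Rightarrow>
     (let dj = d (tau j) (tau (Suc j));
          wj = w (tau j);
          lam = (if wj = 0 then f else min ((dj - rho) / wj) f);
          rho' = rho + lam * wj;
          f' = f - lam;
          c' = c + lam * wj
      in if rho' = dj then (Suc j, 0, f', c') else (j, rho', f', c')))"

text \<open>Processing one task: run the loop while f > 0, starting with f = 1.
  None if the loop does not terminate.\<close>

definition fta_task :: "('s \<Rightarrow> 's \<Rightarrow> real) \<Rightarrow> (nat \<Rightarrow> 's) \<Rightarrow> ('s \<Rightarrow> real)
    \<Rightarrow> nat \<times> real \<times> real \<Rightarrow> (nat \<times> real \<times> real) option" where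
  "fta_task d tau w cfg = (case cfg of (j, rho, c) \<Rightarrow>
     map_option (\<lambda>(j', rho', f', c'). (j', rho', c'))
       (while_option (\<lambda>(j', rho', f', c'). 0 < f') (fta_step d tau w) (j, rho, 1, c)))"

fun fta_conf :: "('s \<Rightarrow> 's \<Rightarrow> real) \<Rightarrow> (nat \<Rightarrow> 's) \<Rightarrow> (nat \<Rightarrow> 's \<Rightarrow> real) \<Rightarrow> nat
    \<Rightarrow> (nat \<times> real \<times> real) option" where
  "fta_conf d tau w 0 = Some (1, 0, 0)"
| "fta_conf d tau w (Suc i) = Option.bind (fta_conf d tau w i) (fta_task d tau (w (Suc i)))"

definition fta_pos :: "('s \<Rightarrow> 's \<Rightarrow> real) \<Rightarrow> (nat \<Rightarrow> 's) \<Rightarrow> (nat \<Rightarrow> 's \<Rightarrow> real) \<Rightarrow> nat \<Rightarrow> nat" where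
  "fta_pos d tau w i = fst (the (fta_conf d tau w i))"

definition fta_cost :: "('s \<Rightarrow> 's \<Rightarrow> real) \<Rightarrow> (nat \<Rightarrow> 's) \<Rightarrow> (nat \<Rightarrow> 's \<Rightarrow> real) \<Rightarrow> nat \<Rightarrow> real" where
  "fta_cost d tau w n = snd (snd (the (fta_conf d tau w n))) + delta d tau 1 (fta_pos d tau w n)"

text \<open>Modified cost c~(j) for j >= j_min (for j < j_min it is infinite and irrelevant).\<close>

definition ctilde :: "('s \<Rightarrow> 's \<Rightarrow> real) \<Rightarrow> (nat \<Rightarrow> 's) \<Rightarrow> ('s \<Rightarrow> real) \<Rightarrow> nat \<Rightarrow> nat \<Rightarrow> real" where
  "ctilde d tau w jmax j = w (tau j) + (if j \<le> jmax then 0 else delta d tau jmax j)"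

text \<open>ell is a valid run (with some tie-breaking) of the follow-the-traversal algorithm
  on tasks w 1..w n, run alongside the FTA.\<close>

definition follow_run :: "('s \<Rightarrow> 's \<Rightarrow> real) \<Rightarrow> (nat \<Rightarrow> 's) \<Rightarrow> (nat \<Rightarrow> 's \<Rightarrow> real) \<Rightarrow> nat
    \<Rightarrow> (nat \<Rightarrow> nat) \<Rightarrow> bool" where
  "follow_run d tau w n ell \<longleftrightarrow> ell 0 = 1 \<and>
     (\<forall>i \<in> {1..n}.
        let jmin = min (ell (i - 1)) (fta_pos d tau w (i - 1));
            jmax = max (ell (i - 1)) (fta_pos d tau w (i - 1))
        in jmin \<le> ell i \<and> (\<forall>j \<ge> jmin. ctilde d tau (w i) jmax (ell i) \<le> ctilde d tau (w i) jmax j))"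

definition follow_cost :: "('s \<Rightarrow> 's \<Rightarrow> real) \<Rightarrow> (nat \<Rightarrow> 's) \<Rightarrow> (nat \<Rightarrow> 's \<Rightarrow> real) \<Rightarrow> nat
    \<Rightarrow> (nat \<Rightarrow> nat) \<Rightarrow> real" where
  "follow_cost d tau w n ell = (\<Sum>i = 1..n. d (tau (ell (i - 1))) (tau (ell i)) + w i (tau (ell i)))"

end

theory Submission
  imports Defs
begin

definition inv_fta :: "('s \<Rightarrow> 's \<Rightarrow> real) \<Rightarrow> (nat \<Rightarrow> 's) \<Rightarrow> ('s \<Rightarrow> real) \<Rightarrow> nat \<Rightarrow> real
   \<Rightarrow> nat \<times> real \<times> real \<times> real \<Rightarrow> bool" where
  "inv_fta d tau w j c s = (case s of (j1,r1,f1,c1) \<Rightarrow> j \<le> j1 \<and> 0 \<le> r1 \<and> r1 \<le> d (tau j1) (tau (Suc j1))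
     \<and> 0 \<le> f1 \<and> f1 \<le> 1 \<and> (\<exists>k. j \<le> k \<and> k \<le> j1 \<and> (1 - f1) * w (tau k) \<le> c1 - c))"

lemma step_inv:
  assumes w0: "\<forall>s. 0 \<le> w s" and d0: "\<forall>s t. 0 \<le> d s t"
    and I: "inv_fta d tau w j c (j1,r1,f1,c1)" and f: "0 < f1"
  shows "inv_fta d tau w j c (fta_step d tau w (j1,r1,f1,c1))"
proof -
  define dj where "dj = d (tau j1) (tau (Suc j1))"
  define wj where "wj = w (tau j1)"
  define lam where "lam = (if wj = 0 then f1 else min ((dj - r1) / wj) f1)"
  have E: "fta_step d tau w (j1,r1,f1,c1) = (if r1 + lam * wj = dj then (Suc j1, 0, f1 - lam, c1 + lam * wj)
     else (j1, r1 + lam * wj, f1 - lam, c1 + lam * wj))"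
    unfolding fta_step_def dj_def wj_def lam_def Let_def by simp
  from I have jj: "j \<le> j1" and r0: "0 \<le> r1" and rd: "r1 \<le> dj" and f1: "f1 \<le> 1"
    and ex: "\<exists>k. j \<le> k \<and> k \<le> j1 \<and> (1 - f1) * w (tau k) \<le> c1 - c"
    unfolding inv_fta_def dj_def by auto
  have wj0: "0 \<le> wj" using w0 wj_def by auto
  have lam0: "0 \<le> lam"
    using f rd wj0 by (auto simp: lam_def)
  have lamf: "lam \<le> f1" by (auto simp: lam_def)
  have lamw: "lam * wj \<le> dj - r1"
  proof (cases "wj = 0")
    case True then show ?thesis using rd by simp
  next
    case False
    then have "wj > 0" using wj0 by simp
    moreover have "lam \<le> (dj - r1) / wj" using False by (simp add: lam_def)
    ultimately show ?thesis by (simp add: pos_le_divide_eq)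
  qed
  have lw0: "0 \<le> lam * wj" using lam0 wj0 by simp
  from ex obtain k where k: "j \<le> k" "k \<le> j1" "(1 - f1) * w (tau k) \<le> c1 - c" by blast
  have ex': "\<exists>k'. j \<le> k' \<and> k' \<le> j1 \<and> (1 - (f1 - lam)) * w (tau k') \<le> c1 + lam * wj - c"
  proof (cases "wj \<le> w (tau k)")
    case True
    have "(1 - f1) * wj \<le> (1 - f1) * w (tau k)" using True f1 by (simp add: mult_left_mono)
    then have "(1 - (f1 - lam)) * wj \<le> c1 + lam * wj - c" using k(3) by (simp add: algebra_simps)
    then show ?thesis using jj by (auto simp: wj_def)
  next
    case False
    have "lam * w (tau k) \<le> lam * wj" using False lam0 by (simp add: mult_left_mono)
    then have "(1 - (f1 - lam)) * w (tau k) \<le> c1 + lam * wj - c" using k(3) by (simp add: algebra_simps)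
    then show ?thesis using k by auto
  qed
  show ?thesis
  proof (cases "r1 + lam * wj = dj")
    case True
    have "0 \<le> d (tau (Suc j1)) (tau (Suc (Suc j1)))" using d0 by auto
    then show ?thesis using True E jj ex' lamf lam0 f1 unfolding inv_fta_def
      by (auto intro: le_SucI)
  next
    case False
    then show ?thesis using E jj ex' lamf lam0 f1 r0 lw0 lamw unfolding inv_fta_def dj_def
      by auto
  qed
qed

lemma task_lemma:
  assumes w0: "\<forall>s. 0 \<le> w s" and d0: "\<forall>s t. 0 \<le> d s t"
    and r0: "0 \<le> rho" and rd: "rho \<le> d (tau j) (tau (Suc j))"
    and T: "fta_task d tau w (j,rho,c) = Some (j',rho',c')"
  shows "j \<le> j' \<and> 0 \<le> rho' \<and> rho' \<le> d (tau j') (tau (Suc j')) \<and> (\<exists>k. j \<le> k \<and> k \<le> j' \<and> w (tau k) \<le> c' - c)"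
proof -
  from T obtain f' where W: "while_option (\<lambda>(j', rho', f', c'). 0 < f') (fta_step d tau w) (j, rho, 1, c)
      = Some (j', rho', f', c')"
    unfolding fta_task_def by (auto split: prod.splits)
  have "inv_fta d tau w j c (j', rho', f', c')"
  proof (rule while_option_rule[OF _ W])
    fix s assume "inv_fta d tau w j c s" "(\<lambda>(j', rho', f', c'). 0 < f') s"
    then show "inv_fta d tau w j c (fta_step d tau w s)"
      using step_inv[OF w0 d0] by (cases s) auto
  next
    show "inv_fta d tau w j c (j, rho, 1, c)" using r0 rd unfolding inv_fta_def by auto
  qed
  moreover have "\<not> 0 < f'" using while_option_stop[OF W] by simp
  ultimately show ?thesis unfolding inv_fta_def by auto
qed


definition PP :: "('s \<Rightarrow> 's \<Rightarrow> real) \<Rightarrow> (nat \<Rightarrow> 's) \<Rightarrow> nat \<Rightarrow> real" where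
  "PP d tau x = (\<Sum>j = 0..<x. d (tau j) (tau (Suc j)))"

lemma PP_diff: "l \<le> l' \<Longrightarrow> (\<Sum>j = l..<l'. d (tau j) (tau (Suc j))) = PP d tau l' - PP d tau l"
  unfolding PP_def using sum.atLeastLessThan_concat[of 0 l l' "\<lambda>j. d (tau j) (tau (Suc j))"] by simp

lemma PP_mono: assumes "\<forall>s t. 0 \<le> (d::'s \<Rightarrow> 's \<Rightarrow> real) s t" "l \<le> l'" shows "PP d tau l \<le> PP d tau l'"
proof -
  have "0 \<le> (\<Sum>j = l..<l'. d (tau j) (tau (Suc j)))" using assms(1) by (simp add: sum_nonneg)
  then show ?thesis using PP_diff[OF assms(2), of d tau] by simp
qed

lemma delta_PP: "delta d tau l l' = \<bar>PP d tau l - PP d tau l'\<bar>" if "\<forall>s t. 0 \<le> d s t"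
proof (cases "l \<le> l'")
  case True
  then show ?thesis using PP_diff[OF True] PP_mono[OF that True] unfolding delta_def
    by (simp add: min_def max_def)
next
  case False
  then have F: "l' \<le> l" by simp
  then show ?thesis using PP_diff[OF F] PP_mono[OF that F] False unfolding delta_def
    by (simp add: min_def max_def)
qed

lemma d_le_sum: assumes "metric_ts d" "a \<le> b"
  shows "d (tau a) (tau b) \<le> (\<Sum>j = a..<b. d (tau j) (tau (Suc j)))"
  using assms(2)
proof (induction b)
  case 0 then show ?case using assms(1) by (simp add: metric_ts_def)
next
  case (Suc b)
  show ?case
  proof (cases "a = Suc b")
    case True then show ?thesis using assms(1) by (simp add: metric_ts_def)
  next
    case False
    then have ab: "a \<le> b" using Suc.prems by simp
    have "d (tau a) (tau (Suc b)) \<le> d (tau a) (tau b) + d (tau b) (tau (Suc b))"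
      using assms(1) by (simp add: metric_ts_def)
    also have "\<dots> \<le> (\<Sum>j = a..<b. d (tau j) (tau (Suc j))) + d (tau b) (tau (Suc b))"
      using Suc.IH[OF ab] by simp
    finally show ?thesis using ab by simp
  qed
qed

lemma d_le_delta: assumes "metric_ts d" shows "d (tau a) (tau b) \<le> delta d tau a b"
proof (cases "a \<le> b")
  case True then show ?thesis using d_le_sum[OF assms True] by (simp add: delta_def min_def max_def)
next
  case False
  then have "b \<le> a" by simp
  then have "d (tau b) (tau a) \<le> delta d tau a b" using d_le_sum[OF assms] False
    by (simp add: delta_def min_def max_def)
  moreover have "d (tau a) (tau b) = d (tau b) (tau a)" using assms by (simp add: metric_ts_def)
  ultimately show ?thesis by simp
qed

lemma real_core:
  fixes A T T' B J wb wj p D :: real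
  assumes "T \<le> J" "J \<le> T'" "min A T \<le> B" "D \<le> \<bar>A - B\<bar>" "0 \<le> wb"
    "wb + max 0 (B - max A T) \<le> wj + max 0 (J - max A T)" "wj \<le> p" "0 \<le> p"
  shows "D + wb + \<bar>B - T'\<bar> - \<bar>A - T\<bar> \<le> 2 * p + 2 * (T' - T)"
proof -
  have q: "max 0 (J - max A T) \<le> T' - T" using assms(1,2) by auto
  have h1: "wb \<le> p + (T' - T)" using assms(6,7) q by (smt (verit))
  have h2: "wb + (B - max A T) \<le> p + (T' - T)" using assms(6,7) q by linarith
  show ?thesis
  proof (cases "A \<le> T")
    case True
    then have M: "max A T = T" "min A T = A" by auto
    have D: "D \<le> B - A" using assms(3,4) M True by auto
    show ?thesis
    proof (cases "B \<le> T'")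
      case True
      then have "\<bar>B - T'\<bar> = T' - B" by simp
      moreover have "\<bar>A - T\<bar> = T - A" using \<open>A \<le> T\<close> by simp
      ultimately have e: "D + wb + \<bar>B - T'\<bar> - \<bar>A - T\<bar> = D + wb + (T' - B) - (T - A)" by simp
      have "D + wb + (T' - B) - (T - A) \<le> 2 * p + 2 * (T' - T)" using D h1 assms(1,2,8) by (smt (verit))
      then show ?thesis using e by simp
    next
      case False
      then have "\<bar>B - T'\<bar> = B - T'" by simp
      moreover have "\<bar>A - T\<bar> = T - A" using \<open>A \<le> T\<close> by simp
      ultimately show ?thesis using D h1 h2 M assms(1,2,5,7,8) by (smt (verit))
    qed
  next
    case False
    then have M: "max A T = A" "min A T = T" by auto
    have A: "\<bar>A - T\<bar> = A - T" using False by simp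
    show ?thesis
    proof (cases "A \<le> B")
      case True
      then have D: "D \<le> B - A" using assms(4) by simp
      show ?thesis
      proof (cases "B \<le> T'")
        case True
        then show ?thesis using A D h1 h2 M assms(1,2,5,7,8) by simp
      next
        case False
        then show ?thesis using A D h1 h2 M assms(1,2,5,7,8) by simp
      qed
    next
      case False
      then have D: "D \<le> A - B" using assms(4) by simp
      have BT: "T \<le> B" using assms(3) M by simp
      show ?thesis
      proof (cases "B \<le> T'")
        case True
        then show ?thesis using A D h1 h2 M BT assms(1,2,5,7,8) by simp
      next
        case False
        then show ?thesis using A D h1 h2 M BT assms(1,2,5,7,8) by simp
      qed
    qed
  qed
qed


lemma ctilde_PP: assumes "\<forall>s t. 0 \<le> d s t"
  shows "ctilde d tau v jm j = v (tau j) + max 0 (PP d tau j - PP d tau jm)"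
proof (cases "j \<le> jm")
  case True then show ?thesis using PP_mono[OF assms True, of tau] by (simp add: ctilde_def)
next
  case False
  then have "jm \<le> j" by simp
  then show ?thesis using False PP_mono[OF assms \<open>jm \<le> j\<close>, of tau] delta_PP[OF assms, of tau jm j]
    by (simp add: ctilde_def)
qed

lemma PP_max: assumes "\<forall>s t. 0 \<le> d s t"
  shows "PP d tau (max a b) = max (PP d tau a) (PP d tau b)" "PP d tau (min a b) = min (PP d tau a) (PP d tau b)"
  using PP_mono[OF assms, of a b tau] PP_mono[OF assms, of b a tau]
  by (cases "a \<le> b"; simp add: max_def min_def)+

lemma main:
  assumes met: "metric_ts d" and wn: "\<forall>i\<in>{1..n}. \<forall>s. 0 \<le> w i s" and fr: "follow_run d tau w n ell"
  shows "i \<le> n \<Longrightarrow> fta_conf d tau w i \<noteq> None \<Longrightarrow> \<exists>t r c. fta_conf d tau w i = Some (t,r,c) \<and> 1 \<le> t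
     \<and> 0 \<le> r \<and> r \<le> d (tau t) (tau (Suc t))
     \<and> (\<Sum>k=1..i. d (tau (ell (k-1))) (tau (ell k)) + w k (tau (ell k))) + delta d tau (ell i) t
        \<le> 2 * (c + delta d tau 1 t)"
proof (induction i)
  have d0: "\<forall>s t. 0 \<le> d s t" using met by (simp add: metric_ts_def)
  case 0
  have "ell 0 = 1" using fr by (simp add: follow_run_def)
  then show ?case using d0 by (simp add: delta_def)
next
  case (Suc i)
  have d0: "\<forall>s t. 0 \<le> d s t" using met by (simp add: metric_ts_def)
  have ni: "fta_conf d tau w i \<noteq> None" using Suc.prems(2) by (cases "fta_conf d tau w i") auto
  from Suc.IH[OF _ ni] Suc.prems(1) obtain t r c where
    C: "fta_conf d tau w i = Some (t,r,c)" and t1: "1 \<le> t" and r0: "0 \<le> r" and rd: "r \<le> d (tau t) (tau (Suc t))"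
    and IH: "(\<Sum>k=1..i. d (tau (ell (k-1))) (tau (ell k)) + w k (tau (ell k))) + delta d tau (ell i) t
        \<le> 2 * (c + delta d tau 1 t)" by auto
  from Suc.prems(2) C obtain t' r' c' where T: "fta_task d tau (w (Suc i)) (t,r,c) = Some (t',r',c')"
    by (cases "fta_task d tau (w (Suc i)) (t,r,c)") auto
  have C': "fta_conf d tau w (Suc i) = Some (t',r',c')" using C T by simp
  have si: "Suc i \<in> {1..n}" using Suc.prems(1) by simp
  have wi: "\<forall>s. 0 \<le> w (Suc i) s" using wn si by blast
  from task_lemma[OF wi d0 r0 rd T] obtain k where tt: "t \<le> t'" and r0': "0 \<le> r'"
    and rd': "r' \<le> d (tau t') (tau (Suc t'))" and k: "t \<le> k" "k \<le> t'" "w (Suc i) (tau k) \<le> c' - c"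
    by blast
  have fpos: "fta_pos d tau w i = t" using C by (simp add: fta_pos_def)
  have F0: "min (ell (Suc i - 1)) (fta_pos d tau w (Suc i - 1)) \<le> ell (Suc i) \<and>
     (\<forall>j \<ge> min (ell (Suc i - 1)) (fta_pos d tau w (Suc i - 1)).
        ctilde d tau (w (Suc i)) (max (ell (Suc i - 1)) (fta_pos d tau w (Suc i - 1))) (ell (Suc i))
         \<le> ctilde d tau (w (Suc i)) (max (ell (Suc i - 1)) (fta_pos d tau w (Suc i - 1))) j)"
    using fr si unfolding follow_run_def Let_def by blast
  then have F1: "min (ell i) t \<le> ell (Suc i)"
    and F2: "ctilde d tau (w (Suc i)) (max (ell i) t) (ell (Suc i)) \<le> ctilde d tau (w (Suc i)) (max (ell i) t) k"
    using fpos k(1) by auto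
  define P where "P = PP d tau"
  let ?a = "ell i" and ?b = "ell (Suc i)"
  have core: "d (tau ?a) (tau ?b) + w (Suc i) (tau ?b) + \<bar>P ?b - P t'\<bar> - \<bar>P ?a - P t\<bar> \<le> 2 * (c' - c) + 2 * (P t' - P t)"
  proof (rule real_core)
    show "P t \<le> P k" "P k \<le> P t'" using PP_mono[OF d0] k unfolding P_def by auto
    show "min (P ?a) (P t) \<le> P ?b" using PP_mono[OF d0 F1, of tau] PP_max(2)[OF d0] unfolding P_def by simp
    show "d (tau ?a) (tau ?b) \<le> \<bar>P ?a - P ?b\<bar>" using d_le_delta[OF met] delta_PP[OF d0] unfolding P_def by metis
    show "0 \<le> w (Suc i) (tau ?b)" using wi by simp
    show "w (Suc i) (tau ?b) + max 0 (P ?b - max (P ?a) (P t)) \<le> w (Suc i) (tau k) + max 0 (P k - max (P ?a) (P t))"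
      using F2 unfolding ctilde_PP[OF d0] P_def PP_max(1)[OF d0] .
    show "w (Suc i) (tau k) \<le> c' - c" by (rule k(3))
    show "0 \<le> c' - c" using k(3) wi order_trans by blast
  qed
  have e1: "delta d tau 1 t = P t - P 1" using delta_PP[OF d0] PP_mono[OF d0 t1] unfolding P_def by simp
  have t1': "1 \<le> t'" using t1 tt by simp
  have e2: "delta d tau 1 t' = P t' - P 1" using delta_PP[OF d0] PP_mono[OF d0 t1'] unfolding P_def by simp
  have e3: "delta d tau ?a t = \<bar>P ?a - P t\<bar>" "delta d tau ?b t' = \<bar>P ?b - P t'\<bar>"
    using delta_PP[OF d0] unfolding P_def by auto
  have S: "(\<Sum>k=1..Suc i. d (tau (ell (k-1))) (tau (ell k)) + w k (tau (ell k))) =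
     (\<Sum>k=1..i. d (tau (ell (k-1))) (tau (ell k)) + w k (tau (ell k))) + (d (tau ?a) (tau ?b) + w (Suc i) (tau ?b))"
    by simp
  have "(\<Sum>k=1..Suc i. d (tau (ell (k-1))) (tau (ell k)) + w k (tau (ell k))) + delta d tau ?b t'
        \<le> 2 * (c' + delta d tau 1 t')"
    using IH core S e1 e2 e3 by (smt (verit))
  then show ?case using C' t1' r0' rd' by auto
qed

theorem theorem2:
  fixes d :: "'s::finite \<Rightarrow> 's \<Rightarrow> real" and tau :: "nat \<Rightarrow> 's"
    and w :: "nat \<Rightarrow> 's \<Rightarrow> real" and n :: nat and ell :: "nat \<Rightarrow> nat"
  assumes "metric_ts d"
    and "\<forall>i \<in> {1..n}. \<forall>s. 0 \<le> w i s"
    and "fta_conf d tau w n \<noteq> None"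
    and "follow_run d tau w n ell"
  shows "follow_cost d tau w n ell \<le> 2 * fta_cost d tau w n"
proof -
  have d0: "\<forall>s t. 0 \<le> d s t" using assms(1) by (simp add: metric_ts_def)
  from main[OF assms(1,2,4) le_refl assms(3)] obtain t r c where
    C: "fta_conf d tau w n = Some (t,r,c)"
    and H: "(\<Sum>k=1..n. d (tau (ell (k-1))) (tau (ell k)) + w k (tau (ell k))) + delta d tau (ell n) t
        \<le> 2 * (c + delta d tau 1 t)" by blast
  have "0 \<le> delta d tau (ell n) t" using delta_PP[OF d0] by simp
  then show ?thesis using H C unfolding follow_cost_def fta_cost_def fta_pos_def by simp
qed

end
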